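(* Let $T$ be a left regular near-truss without an absorber. Then $\mathrm{Q}(T)$ is a brace-type near-truss; that is, for all $b\in T$, the retract of $\mathrm{Q}(T)$ at $\frac{b}{b}$, together with the multiplication of fractions $\frac{a}{b}\cdot\frac{a'}{b'}=\frac{\gamma a'}{\gamma' b}$ (where $\gamma,\gamma'\in T$ satisfy $\gamma b'=\gamma' a$), is a skew brace.
   Context: A heap is a set with a ternary operation $[-,-,-]$ satisfying $[a_1,a_2,[a_3,a_4,a_5]]=[[a_1,a_2,a_3],a_4,a_5]$ and $[a,a,b]=b=[b,a,a]$; its retract at $e$ is the group with operation $x+_ey=[x,e,y]$. A pre-truss is a heap with an associative multiplication; a near-truss additionally satisfies $a[b,c,d]=[ab,ac,ad]$. An absorber is $z$ with $tz=z=zt$ for all $t$. $T$ is a domain if for every $a\in T$ that is not an absorber and all $b\neq c$, $ab\neq ac$ and $ba\neq ca$; $T$ is left regular if it is a domain and for all non-absorbers $x,y$ there exist non-absorbers $r,s$ with $rx=sy$. $\mathrm{Q}(T)$ is the set of classes $\frac{a}{b}$ of pairs $(b,a)$, $b$ not an absorber, under $(b,a)\sim(b',a')$ iff $\beta b=\beta'b'$ and $\beta a=\beta'a'$ for some non-absorbers $\beta,\beta'$, with heap operation $\left[\frac{a}{b},\frac{a'}{b'},\frac{a''}{b''}\right]=\frac{[\beta_1a,\beta_2a',\beta_3a'']}{\beta_1b}$ for non-absorbers with $\beta_1b=\beta_2b'=\beta_3b''$, and the multiplication above; this is a well-defined near-truss. A near-truss is brace-type if its multiplication is a group. A skew brace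 is a triple $(B,+,\cdot)$ with $(B,+)$ and $(B,\cdot)$ groups and $a(b+c)=ab-a+ac$. *)

theory Defs
  imports "HOL-Algebra.Group"
begin

definition is_heap :: "'a set \<Rightarrow> ('a \<Rightarrow> 'a \<Rightarrow> 'a \<Rightarrow> 'a) \<Rightarrow> bool" where
  "is_heap A h \<longleftrightarrow>
     (\<forall>a\<in>A. \<forall>b\<in>A. \<forall>c\<in>A. h a b c \<in> A) \<and>
     (\<forall>a1\<in>A. \<forall>a2\<in>A. \<forall>a3\<in>A. \<forall>a4\<in>A. \<forall>a5\<in>A.
        h a1 a2 (h a3 a4 a5) = h (h a1 a2 a3) a4 a5) \<and>
     (\<forall>a\<in>A. \<forall>b\<in>A. h a a b = b \<and> h b a a = b)"

definition near_truss :: "'a set \<Rightarrow> ('a \<Rightarrow> 'a \<Rightarrow> 'a \<Rightarrow> 'a) \<Rightarrow> ('a \<Rightarrow> 'a \<Rightarrow> 'a) \<Rightarrow> bool" where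
  "near_truss A h m \<longleftrightarrow> is_heap A h \<and>
     (\<forall>a\<in>A. \<forall>b\<in>A. m a b \<in> A) \<and>
     (\<forall>a\<in>A. \<forall>b\<in>A. \<forall>c\<in>A. m (m a b) c = m a (m b c)) \<and>
     (\<forall>a\<in>A. \<forall>b\<in>A. \<forall>c\<in>A. \<forall>d\<in>A. m a (h b c d) = h (m a b) (m a c) (m a d))"

definition absorber :: "'a set \<Rightarrow> ('a \<Rightarrow> 'a \<Rightarrow> 'a) \<Rightarrow> 'a \<Rightarrow> bool" where
  "absorber A m z \<longleftrightarrow> z \<in> A \<and> (\<forall>t\<in>A. m t z = z \<and> m z t = z)"

definition is_domain :: "'a set \<Rightarrow> ('a \<Rightarrow> 'a \<Rightarrow> 'a) \<Rightarrow> bool" where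
  "is_domain A m \<longleftrightarrow>
     (\<forall>a\<in>A. \<not> absorber A m a \<longrightarrow>
        (\<forall>b\<in>A. \<forall>c\<in>A. b \<noteq> c \<longrightarrow> m a b \<noteq> m a c \<and> m b a \<noteq> m c a))"

definition left_regular :: "'a set \<Rightarrow> ('a \<Rightarrow> 'a \<Rightarrow> 'a) \<Rightarrow> bool" where
  "left_regular A m \<longleftrightarrow> is_domain A m \<and>
     (\<forall>x\<in>A. \<forall>y\<in>A. \<not> absorber A m x \<longrightarrow> \<not> absorber A m y \<longrightarrow>
        (\<exists>r\<in>A. \<exists>s\<in>A. \<not> absorber A m r \<and> \<not> absorber A m s \<and> m r x = m s y))"

section \<open>The near-truss of fractions Q(T); the fraction a/b is the class of the pair (b,a)\<close>

definition frac_pairs :: "'a set \<Rightarrow> ('a \<Rightarrow> 'a \<Rightarrow> 'a) \<Rightarrow> ('a \<times> 'a) set" where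
  "frac_pairs A m = {(b, a). b \<in> A \<and> a \<in> A \<and> \<not> absorber A m b}"

definition frac_rel :: "'a set \<Rightarrow> ('a \<Rightarrow> 'a \<Rightarrow> 'a) \<Rightarrow> (('a \<times> 'a) \<times> ('a \<times> 'a)) set" where
  "frac_rel A m = {((b, a), (b', a')). (b, a) \<in> frac_pairs A m \<and> (b', a') \<in> frac_pairs A m \<and>
     (\<exists>\<beta>\<in>A. \<exists>\<beta>'\<in>A. \<not> absorber A m \<beta> \<and> \<not> absorber A m \<beta>' \<and>
        m \<beta> b = m \<beta>' b' \<and> m \<beta> a = m \<beta>' a')}"

definition frac :: "'a set \<Rightarrow> ('a \<Rightarrow> 'a \<Rightarrow> 'a) \<Rightarrow> 'a \<Rightarrow> 'a \<Rightarrow> ('a \<times> 'a) set" where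
  "frac A m a b = frac_rel A m `` {(b, a)}"

definition Q :: "'a set \<Rightarrow> ('a \<Rightarrow> 'a \<Rightarrow> 'a) \<Rightarrow> ('a \<times> 'a) set set" where
  "Q A m = frac_pairs A m // frac_rel A m"

definition Q_heap :: "'a set \<Rightarrow> ('a \<Rightarrow> 'a \<Rightarrow> 'a \<Rightarrow> 'a) \<Rightarrow> ('a \<Rightarrow> 'a \<Rightarrow> 'a)
    \<Rightarrow> ('a \<times> 'a) set \<Rightarrow> ('a \<times> 'a) set \<Rightarrow> ('a \<times> 'a) set \<Rightarrow> ('a \<times> 'a) set" where
  "Q_heap A h m X Y Z = (THE W. \<exists>b a b' a' b'' a'' \<beta>1 \<beta>2 \<beta>3.
     (b, a) \<in> X \<and> (b', a') \<in> Y \<and> (b'', a'') \<in> Z \<and>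
     \<beta>1 \<in> A \<and> \<beta>2 \<in> A \<and> \<beta>3 \<in> A \<and>
     \<not> absorber A m \<beta>1 \<and> \<not> absorber A m \<beta>2 \<and> \<not> absorber A m \<beta>3 \<and>
     m \<beta>1 b = m \<beta>2 b' \<and> m \<beta>2 b' = m \<beta>3 b'' \<and>
     W = frac A m (h (m \<beta>1 a) (m \<beta>2 a') (m \<beta>3 a'')) (m \<beta>1 b))"

definition Q_mul :: "'a set \<Rightarrow> ('a \<Rightarrow> 'a \<Rightarrow> 'a)
    \<Rightarrow> ('a \<times> 'a) set \<Rightarrow> ('a \<times> 'a) set \<Rightarrow> ('a \<times> 'a) set" where
  "Q_mul A m X Y = (THE W. \<exists>b a b' a' \<gamma> \<gamma>'.
     (b, a) \<in> X \<and> (b', a') \<in> Y \<and> \<gamma> \<in> A \<and> \<gamma>' \<in> A \<and>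
     m \<gamma> b' = m \<gamma>' a \<and>
     W = frac A m (m \<gamma> a') (m \<gamma>' b))"

definition retract :: "('b \<Rightarrow> 'b \<Rightarrow> 'b \<Rightarrow> 'b) \<Rightarrow> 'b \<Rightarrow> 'b \<Rightarrow> 'b \<Rightarrow> 'b" where
  "retract h e x y = h x e y"

definition skew_brace :: "'b set \<Rightarrow> ('b \<Rightarrow> 'b \<Rightarrow> 'b) \<Rightarrow> ('b \<Rightarrow> 'b \<Rightarrow> 'b) \<Rightarrow> bool" where
  "skew_brace B add mul \<longleftrightarrow> (\<exists>z u.
     group \<lparr>carrier = B, monoid.mult = add, one = z\<rparr> \<and>
     group \<lparr>carrier = B, monoid.mult = mul, one = u\<rparr> \<and>
     (\<forall>a\<in>B. \<forall>b\<in>B. \<forall>c\<in>B.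
        mul a (add b c) =
          add (add (mul a b) (inv\<^bsub>\<lparr>carrier = B, monoid.mult = add, one = z\<rparr>\<^esub> a)) (mul a c)))"

end

theory Submission
  imports Defs
begin

lemma heap_retract_group:
  assumes H: "is_heap B H" and e: "e \<in> B"
  shows "group \<lparr>carrier = B, monoid.mult = retract H e, one = e\<rparr>"
proof (rule groupI)
  show "\<And>x y. x \<in> carrier \<lparr>carrier = B, monoid.mult = retract H e, one = e\<rparr> \<Longrightarrow>
    y \<in> carrier \<lparr>carrier = B, monoid.mult = retract H e, one = e\<rparr> \<Longrightarrow>
    x \<otimes>\<^bsub>\<lparr>carrier = B, monoid.mult = retract H e, one = e\<rparr>\<^esub> y \<in> carrier \<lparr>carrier = B, monoid.mult = retract H e, one = e\<rparr>"
    using H e by (simp add: is_heap_def retract_def)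
  show "\<one>\<^bsub>\<lparr>carrier = B, monoid.mult = retract H e, one = e\<rparr>\<^esub> \<in> carrier \<lparr>carrier = B, monoid.mult = retract H e, one = e\<rparr>"
    using e by simp
  show "\<And>x y z. x \<in> carrier \<lparr>carrier = B, monoid.mult = retract H e, one = e\<rparr> \<Longrightarrow>
    y \<in> carrier \<lparr>carrier = B, monoid.mult = retract H e, one = e\<rparr> \<Longrightarrow>
    z \<in> carrier \<lparr>carrier = B, monoid.mult = retract H e, one = e\<rparr> \<Longrightarrow>
    x \<otimes>\<^bsub>\<lparr>carrier = B, monoid.mult = retract H e, one = e\<rparr>\<^esub> y \<otimes>\<^bsub>\<lparr>carrier = B, monoid.mult = retract H e, one = e\<rparr>\<^esub> z =
    x \<otimes>\<^bsub>\<lparr>carrier = B, monoid.mult = retract H e, one = e\<rparr>\<^esub> (y \<otimes>\<^bsub>\<lparr>carrier = B, monoid.mult = retract H e, one = e\<rparr>\<^esub> z)"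
    using H e by (simp add: is_heap_def retract_def)
  show "\<And>x. x \<in> carrier \<lparr>carrier = B, monoid.mult = retract H e, one = e\<rparr> \<Longrightarrow>
     \<one>\<^bsub>\<lparr>carrier = B, monoid.mult = retract H e, one = e\<rparr>\<^esub> \<otimes>\<^bsub>\<lparr>carrier = B, monoid.mult = retract H e, one = e\<rparr>\<^esub> x = x"
    using H e by (simp add: is_heap_def retract_def)
  show "\<And>x. x \<in> carrier \<lparr>carrier = B, monoid.mult = retract H e, one = e\<rparr> \<Longrightarrow>
     \<exists>y\<in>carrier \<lparr>carrier = B, monoid.mult = retract H e, one = e\<rparr>.
        y \<otimes>\<^bsub>\<lparr>carrier = B, monoid.mult = retract H e, one = e\<rparr>\<^esub> x = \<one>\<^bsub>\<lparr>carrier = B, monoid.mult = retract H e, one = e\<rparr>\<^esub>"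
  proof -
    fix x assume x: "x \<in> carrier \<lparr>carrier = B, monoid.mult = retract H e, one = e\<rparr>"
    then have xB: "x \<in> B" by simp
    have "H e x e \<in> B" using H e xB by (simp add: is_heap_def)
    moreover have "retract H e (H e x e) x = e"
      using H e xB unfolding retract_def is_heap_def by metis
    ultimately show "\<exists>y\<in>carrier \<lparr>carrier = B, monoid.mult = retract H e, one = e\<rparr>.
        y \<otimes>\<^bsub>\<lparr>carrier = B, monoid.mult = retract H e, one = e\<rparr>\<^esub> x = \<one>\<^bsub>\<lparr>carrier = B, monoid.mult = retract H e, one = e\<rparr>\<^esub>"
      by auto
  qed
qed

lemma heap_retract_inv:
  assumes H: "is_heap B H" and e: "e \<in> B" and x: "x \<in> B"
  shows "inv\<^bsub>\<lparr>carrier = B, monoid.mult = retract H e, one = e\<rparr>\<^esub> x = H e x e"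
proof -
  interpret G: group "\<lparr>carrier = B, monoid.mult = retract H e, one = e\<rparr>"
    by (rule heap_retract_group[OF H e])
  have "H e x e \<in> B" using H e x by (simp add: is_heap_def)
  moreover have "retract H e (H e x e) x = e"
    using H e x unfolding retract_def is_heap_def by metis
  ultimately show ?thesis using x by (intro G.inv_equality) auto
qed

lemma near_truss_group_skew_brace:
  assumes N: "near_truss B H M" and G: "group \<lparr>carrier = B, monoid.mult = M, one = u\<rparr>"
  shows "skew_brace B (retract H u) M"
proof -
  interpret G: group "\<lparr>carrier = B, monoid.mult = M, one = u\<rparr>" by (rule G)
  have H: "is_heap B H" using N by (simp add: near_truss_def)
  have uB: "u \<in> B" using G.one_closed by simp
  have ru: "\<And>a. a \<in> B \<Longrightarrow> M a u = a" using G.r_one by simp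
  have dist: "\<And>a b c d. a\<in>B \<Longrightarrow> b\<in>B \<Longrightarrow> c\<in>B \<Longrightarrow> d\<in>B \<Longrightarrow> M a (H b c d) = H (M a b) (M a c) (M a d)"
    using N by (simp add: near_truss_def)
  have mc: "\<And>a b. a\<in>B \<Longrightarrow> b\<in>B \<Longrightarrow> M a b \<in> B" using N by (simp add: near_truss_def)
  have hc: "\<And>a b c. a\<in>B \<Longrightarrow> b\<in>B \<Longrightarrow> c\<in>B \<Longrightarrow> H a b c \<in> B" using H by (simp add: is_heap_def)
  have ha: "\<And>a1 a2 a3 a4 a5. a1\<in>B \<Longrightarrow> a2\<in>B \<Longrightarrow> a3\<in>B \<Longrightarrow> a4\<in>B \<Longrightarrow> a5\<in>B \<Longrightarrow>
        H a1 a2 (H a3 a4 a5) = H (H a1 a2 a3) a4 a5" using H by (simp add: is_heap_def)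
  have hi: "\<And>a b. a\<in>B \<Longrightarrow> b\<in>B \<Longrightarrow> H a a b = b \<and> H b a a = b" using H by (simp add: is_heap_def)
  show ?thesis unfolding skew_brace_def
  proof (intro exI conjI ballI)
    show "group \<lparr>carrier = B, monoid.mult = retract H u, one = u\<rparr>"
      by (rule heap_retract_group[OF H uB])
    show "group \<lparr>carrier = B, monoid.mult = M, one = u\<rparr>" by (rule G)
    fix a b c assume a: "a \<in> B" and b: "b \<in> B" and c: "c \<in> B"
    have "M a (retract H u b c) = H (M a b) a (M a c)"
      using dist[OF a b uB c] ru[OF a] by (simp add: retract_def)
    also have "\<dots> = H (H (M a b) u (H u a u)) u (M a c)"
    proof -
      have "H (M a b) u (H u a u) = H (H (M a b) u u) a u" using ha mc a b uB by simp
      also have "\<dots> = H (M a b) a u" using hi mc a b uB by simp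
      finally have "H (H (M a b) u (H u a u)) u (M a c) = H (H (M a b) a u) u (M a c)" by simp
      also have "\<dots> = H (M a b) a (H u u (M a c))" using ha mc a b c uB by simp
      also have "\<dots> = H (M a b) a (M a c)" using hi mc a c uB by simp
      finally show ?thesis by simp
    qed
    finally show "M a (retract H u b c) =
         retract H u (retract H u (M a b) (inv\<^bsub>\<lparr>carrier = B, monoid.mult = retract H u, one = u\<rparr>\<^esub> a)) (M a c)"
      using heap_retract_inv[OF H uB a] by (simp add: retract_def)
  qed
qed

context
  fixes A :: "'a set" and h :: "'a \<Rightarrow> 'a \<Rightarrow> 'a \<Rightarrow> 'a" and m :: "'a \<Rightarrow> 'a \<Rightarrow> 'a"
  assumes nt: "near_truss A h m" and lr: "left_regular A m" and na: "\<not> (\<exists>z. absorber A m z)"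
begin

lemma nabs: "\<not> absorber A m x" using na by blast
lemma mc: "x\<in>A \<Longrightarrow> y\<in>A \<Longrightarrow> m x y \<in> A" using nt by (simp add: near_truss_def)
lemma hc: "x\<in>A \<Longrightarrow> y\<in>A \<Longrightarrow> z\<in>A \<Longrightarrow> h x y z \<in> A" using nt by (simp add: near_truss_def is_heap_def)
lemma ma: "x\<in>A \<Longrightarrow> y\<in>A \<Longrightarrow> z\<in>A \<Longrightarrow> m (m x y) z = m x (m y z)" using nt by (simp add: near_truss_def)
lemma dist: "a\<in>A \<Longrightarrow> b\<in>A \<Longrightarrow> c\<in>A \<Longrightarrow> d\<in>A \<Longrightarrow> m a (h b c d) = h (m a b) (m a c) (m a d)"
  using nt by (simp add: near_truss_def)
lemma hassoc: "a1\<in>A \<Longrightarrow> a2\<in>A \<Longrightarrow> a3\<in>A \<Longrightarrow> a4\<in>A \<Longrightarrow> a5\<in>A \<Longrightarrow>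
        h a1 a2 (h a3 a4 a5) = h (h a1 a2 a3) a4 a5" using nt by (simp add: near_truss_def is_heap_def)
lemma hid: "a\<in>A \<Longrightarrow> b\<in>A \<Longrightarrow> h a a b = b \<and> h b a a = b" using nt by (simp add: near_truss_def is_heap_def)
lemma cl: "t\<in>A \<Longrightarrow> x\<in>A \<Longrightarrow> y\<in>A \<Longrightarrow> m t x = m t y \<Longrightarrow> x = y"
  using lr nabs unfolding left_regular_def is_domain_def by blast
lemma cr: "t\<in>A \<Longrightarrow> x\<in>A \<Longrightarrow> y\<in>A \<Longrightarrow> m x t = m y t \<Longrightarrow> x = y"
  using lr nabs unfolding left_regular_def is_domain_def by blast
lemma ore: "x\<in>A \<Longrightarrow> y\<in>A \<Longrightarrow> \<exists>r\<in>A. \<exists>s\<in>A. m r x = m s y"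
  using lr nabs unfolding left_regular_def by blast

lemma fp: "(b,a) \<in> frac_pairs A m \<longleftrightarrow> b\<in>A \<and> a\<in>A"
  by (simp add: frac_pairs_def nabs)

lemma rel: "((b,a),(b',a')) \<in> frac_rel A m \<longleftrightarrow> b\<in>A \<and> a\<in>A \<and> b'\<in>A \<and> a'\<in>A \<and>
   (\<exists>\<beta>\<in>A. \<exists>\<beta>'\<in>A. m \<beta> b = m \<beta>' b' \<and> m \<beta> a = m \<beta>' a')"
  by (simp add: frac_rel_def fp nabs)

lemma key:
  assumes r: "((b,a),(b',a')) \<in> frac_rel A m" and g: "\<gamma>\<in>A" "\<gamma>'\<in>A" and e: "m \<gamma> b = m \<gamma>' b'"
  shows "m \<gamma> a = m \<gamma>' a'"
proof -
  obtain \<beta> \<beta>' where A: "b\<in>A" "a\<in>A" "b'\<in>A" "a'\<in>A" "\<beta>\<in>A" "\<beta>'\<in>A"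
    and e1: "m \<beta> b = m \<beta>' b'" and e2: "m \<beta> a = m \<beta>' a'" using r rel by blast
  obtain r s where rs: "r\<in>A" "s\<in>A" "m r \<gamma> = m s \<beta>" using ore[OF g(1) A(5)] by blast
  have "m (m r \<gamma>') b' = m r (m \<gamma> b)" using e rs A g by (simp add: ma)
  also have "\<dots> = m (m s \<beta>) b" using rs A g by (simp add: ma[symmetric])
  also have "\<dots> = m (m s \<beta>') b'" using e1 rs A by (simp add: ma)
  finally have q0: "m (m r \<gamma>') b' = m (m s \<beta>') b'" .
  have q: "m r \<gamma>' = m s \<beta>'" by (rule cr[OF A(3) mc[OF rs(1) g(2)] mc[OF rs(2) A(6)] q0])
  have "m r (m \<gamma> a) = m (m s \<beta>) a" using rs A g by (simp add: ma[symmetric])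
  also have "\<dots> = m (m s \<beta>') a'" using e2 rs A by (simp add: ma)
  also have "\<dots> = m r (m \<gamma>' a')" using q rs A g by (simp add: ma[symmetric])
  finally show ?thesis by (rule cl[OF rs(1) mc[OF g(1) A(2)] mc[OF g(2) A(4)]])
qed

lemma eqv: "equiv (frac_pairs A m) (frac_rel A m)"
proof (rule equivI)
  show "frac_rel A m \<subseteq> frac_pairs A m \<times> frac_pairs A m" by (auto simp: frac_rel_def)
  show "refl_on (frac_pairs A m) (frac_rel A m)"
    unfolding refl_on_def by (auto simp: fp rel) blast
  show "sym (frac_rel A m)" unfolding sym_def by (auto simp: rel) (metis)+
  show "trans (frac_rel A m)" unfolding trans_def
  proof (intro allI impI)
    fix x y z assume xy: "(x, y) \<in> frac_rel A m" and yz: "(y, z) \<in> frac_rel A m"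
    obtain b a where x: "x = (b,a)" by fastforce
    obtain b' a' where y: "y = (b',a')" by fastforce
    obtain b'' a'' where z: "z = (b'',a'')" by fastforce
    obtain \<beta> \<beta>' where A: "b\<in>A" "a\<in>A" "b'\<in>A" "a'\<in>A" "\<beta>\<in>A" "\<beta>'\<in>A"
      and e1: "m \<beta> b = m \<beta>' b'" and e2: "m \<beta> a = m \<beta>' a'" using xy x y rel by blast
    obtain \<delta> \<delta>' where B: "b''\<in>A" "a''\<in>A" "\<delta>\<in>A" "\<delta>'\<in>A"
      and f1: "m \<delta> b' = m \<delta>' b''" and f2: "m \<delta> a' = m \<delta>' a''" using yz y z rel by blast
    obtain r s where rs: "r\<in>A" "s\<in>A" "m r \<beta>' = m s \<delta>" using ore[OF A(6) B(3)] by blast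
    have "m (m r \<beta>) b = m (m s \<delta>') b''"
      using e1 f1 rs A B by (metis ma)
    moreover have "m (m r \<beta>) a = m (m s \<delta>') a''"
      using e2 f2 rs A B by (metis ma)
    ultimately show "(x, z) \<in> frac_rel A m" using x z rel A B rs mc by blast
  qed
qed

lemma frac_in: "a\<in>A \<Longrightarrow> b\<in>A \<Longrightarrow> frac A m a b \<in> Q A m"
  unfolding frac_def Q_def by (rule quotientI) (simp add: fp)

lemma frac_eq: "a\<in>A \<Longrightarrow> b\<in>A \<Longrightarrow> a'\<in>A \<Longrightarrow> b'\<in>A \<Longrightarrow>
   frac A m a b = frac A m a' b' \<longleftrightarrow> ((b,a),(b',a')) \<in> frac_rel A m"
  unfolding frac_def using eq_equiv_class_iff[OF eqv] by (simp add: fp)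

lemma Q_cases: "X \<in> Q A m \<Longrightarrow> (\<And>a b. a\<in>A \<Longrightarrow> b\<in>A \<Longrightarrow> X = frac A m a b \<Longrightarrow> P) \<Longrightarrow> P"
  unfolding Q_def frac_def by (erule quotientE) (auto simp: fp)

lemma mem_frac: "(b',a') \<in> frac A m a b \<longleftrightarrow> ((b,a),(b',a')) \<in> frac_rel A m"
  by (simp add: frac_def)

lemma frac_scale: "t\<in>A \<Longrightarrow> a\<in>A \<Longrightarrow> b\<in>A \<Longrightarrow> frac A m (m t a) (m t b) = frac A m a b"
  apply (subst frac_eq) apply (auto simp: mc rel)
  apply (rule bexI[of _ t], rule bexI[of _ "m t t"]) apply (auto simp: ma mc)
  done

lemma frac_one: "b\<in>A \<Longrightarrow> c\<in>A \<Longrightarrow> frac A m b b = frac A m c c"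
  using ore[of b c] by (subst frac_eq) (auto simp: rel)


lemma self_frac: "a\<in>A \<Longrightarrow> b\<in>A \<Longrightarrow> (b,a) \<in> frac A m a b"
  by (simp add: mem_frac rel) blast

lemma heap_eq:
  assumes A: "a1\<in>A" "b1\<in>A" "a2\<in>A" "b2\<in>A" "a3\<in>A" "b3\<in>A" "\<beta>1\<in>A" "\<beta>2\<in>A" "\<beta>3\<in>A"
  and e: "m \<beta>1 b1 = m \<beta>2 b2" "m \<beta>2 b2 = m \<beta>3 b3"
  shows "Q_heap A h m (frac A m a1 b1) (frac A m a2 b2) (frac A m a3 b3) =
     frac A m (h (m \<beta>1 a1) (m \<beta>2 a2) (m \<beta>3 a3)) (m \<beta>1 b1)"
  unfolding Q_heap_def
proof (rule the_equality)
  show "\<exists>b a b' a' b'' a'' \<beta>1' \<beta>2' \<beta>3'.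
     (b, a) \<in> frac A m a1 b1 \<and> (b', a') \<in> frac A m a2 b2 \<and> (b'', a'') \<in> frac A m a3 b3 \<and>
     \<beta>1' \<in> A \<and> \<beta>2' \<in> A \<and> \<beta>3' \<in> A \<and>
     \<not> absorber A m \<beta>1' \<and> \<not> absorber A m \<beta>2' \<and> \<not> absorber A m \<beta>3' \<and>
     m \<beta>1' b = m \<beta>2' b' \<and> m \<beta>2' b' = m \<beta>3' b'' \<and>
     frac A m (h (m \<beta>1 a1) (m \<beta>2 a2) (m \<beta>3 a3)) (m \<beta>1 b1) =
       frac A m (h (m \<beta>1' a) (m \<beta>2' a') (m \<beta>3' a'')) (m \<beta>1' b)"
    apply (rule exI[where x=b1], rule exI[where x=a1], rule exI[where x=b2], rule exI[where x=a2],
       rule exI[where x=b3], rule exI[where x=a3], rule exI[where x=\<beta>1], rule exI[where x=\<beta>2],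
       rule exI[where x=\<beta>3])
    using A e by (simp add: self_frac nabs)
next
  fix W assume "\<exists>b a b' a' b'' a'' \<beta>1' \<beta>2' \<beta>3'.
     (b, a) \<in> frac A m a1 b1 \<and> (b', a') \<in> frac A m a2 b2 \<and> (b'', a'') \<in> frac A m a3 b3 \<and>
     \<beta>1' \<in> A \<and> \<beta>2' \<in> A \<and> \<beta>3' \<in> A \<and>
     \<not> absorber A m \<beta>1' \<and> \<not> absorber A m \<beta>2' \<and> \<not> absorber A m \<beta>3' \<and>
     m \<beta>1' b = m \<beta>2' b' \<and> m \<beta>2' b' = m \<beta>3' b'' \<and>
     W = frac A m (h (m \<beta>1' a) (m \<beta>2' a') (m \<beta>3' a'')) (m \<beta>1' b)"
  then obtain c1 d1 c2 d2 c3 d3 \<delta>1 \<delta>2 \<delta>3 where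
    r1: "((b1,a1),(c1,d1)) \<in> frac_rel A m" and r2: "((b2,a2),(c2,d2)) \<in> frac_rel A m"
    and r3: "((b3,a3),(c3,d3)) \<in> frac_rel A m" and D: "\<delta>1\<in>A" "\<delta>2\<in>A" "\<delta>3\<in>A"
    and f: "m \<delta>1 c1 = m \<delta>2 c2" "m \<delta>2 c2 = m \<delta>3 c3"
    and W: "W = frac A m (h (m \<delta>1 d1) (m \<delta>2 d2) (m \<delta>3 d3)) (m \<delta>1 c1)"
    by (auto simp: mem_frac)
  have C: "c1\<in>A" "d1\<in>A" "c2\<in>A" "d2\<in>A" "c3\<in>A" "d3\<in>A" using r1 r2 r3 rel by auto
  obtain r s where rs: "r\<in>A" "s\<in>A" "m r (m \<beta>1 b1) = m s (m \<delta>1 c1)"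
    using ore[OF mc[OF A(7) A(2)] mc[OF D(1) C(1)]] by blast
  have g1: "m (m r \<beta>1) b1 = m (m s \<delta>1) c1" using rs A D C by (simp add: ma)
  have g2: "m (m r \<beta>2) b2 = m (m s \<delta>2) c2" using rs A D C e f by (simp add: ma)
  have g3: "m (m r \<beta>3) b3 = m (m s \<delta>3) c3" using rs A D C e f by (simp add: ma)
  have k1: "m r (m \<beta>1 a1) = m s (m \<delta>1 d1)"
    using key[OF r1 mc[OF rs(1) A(7)] mc[OF rs(2) D(1)] g1] rs A D C by (simp add: ma)
  have k2: "m r (m \<beta>2 a2) = m s (m \<delta>2 d2)"
    using key[OF r2 mc[OF rs(1) A(8)] mc[OF rs(2) D(2)] g2] rs A D C by (simp add: ma)
  have k3: "m r (m \<beta>3 a3) = m s (m \<delta>3 d3)"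
    using key[OF r3 mc[OF rs(1) A(9)] mc[OF rs(2) D(3)] g3] rs A D C by (simp add: ma)
  have "m s (h (m \<delta>1 d1) (m \<delta>2 d2) (m \<delta>3 d3)) = m r (h (m \<beta>1 a1) (m \<beta>2 a2) (m \<beta>3 a3))"
    using rs A D C k1 k2 k3 by (simp add: dist mc)
  then show "W = frac A m (h (m \<beta>1 a1) (m \<beta>2 a2) (m \<beta>3 a3)) (m \<beta>1 b1)"
    unfolding W using rs A D C
    apply (subst frac_eq)
        apply (simp_all add: mc hc)
    apply (simp add: rel mc hc)
    apply (rule bexI[where x=s], rule bexI[where x=r])
      apply (auto simp: rs)
    done
qed

lemma heap_same:
  assumes "x1\<in>A" "x2\<in>A" "x3\<in>A" "D\<in>A"
  shows "Q_heap A h m (frac A m x1 D) (frac A m x2 D) (frac A m x3 D) = frac A m (h x1 x2 x3) D"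
proof -
  have "Q_heap A h m (frac A m x1 D) (frac A m x2 D) (frac A m x3 D) =
     frac A m (h (m D x1) (m D x2) (m D x3)) (m D D)"
    using assms by (intro heap_eq) auto
  also have "\<dots> = frac A m (m D (h x1 x2 x3)) (m D D)" using assms by (simp add: dist)
  also have "\<dots> = frac A m (h x1 x2 x3) D" using assms by (simp add: frac_scale hc)
  finally show ?thesis .
qed

lemma extend: "D\<in>A \<Longrightarrow> Y \<in> Q A m \<Longrightarrow> \<exists>r\<in>A. \<exists>y\<in>A. Y = frac A m y (m r D)"
proof -
  assume D: "D\<in>A" and Y: "Y \<in> Q A m"
  obtain a b where ab: "a\<in>A" "b\<in>A" "Y = frac A m a b" by (rule Q_cases[OF Y])
  obtain r s where rs: "r\<in>A" "s\<in>A" "m r D = m s b" using ore[OF D ab(2)] by blast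
  have "Y = frac A m (m s a) (m r D)" using rs ab by (simp add: frac_scale)
  moreover have "m s a \<in> A" using rs ab by (simp add: mc)
  ultimately show ?thesis using rs by blast
qed

lemma common: "set Xs \<subseteq> Q A m \<Longrightarrow> A \<noteq> {} \<Longrightarrow>
   \<exists>D\<in>A. \<exists>xs. set xs \<subseteq> A \<and> Xs = map (\<lambda>x. frac A m x D) xs"
proof (induction Xs)
  case Nil
  then obtain D where "D \<in> A" by blast
  then show ?case by (intro bexI[of _ D] exI[of _ "[]"]) auto
next
  case (Cons X Xs)
  have "set Xs \<subseteq> Q A m" using Cons.prems(1) by simp
  then obtain D xs where D: "D\<in>A" "set xs \<subseteq> A" "Xs = map (\<lambda>x. frac A m x D) xs"
    using Cons.IH Cons.prems(2) by auto
  have XQ: "X \<in> Q A m" using Cons.prems(1) by simp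
  obtain r y where ry: "r\<in>A" "y\<in>A" "X = frac A m y (m r D)" using extend[OF D(1) XQ] by blast
  have "Xs = map (\<lambda>x. frac A m x (m r D)) (map (m r) xs)"
  proof -
    have "\<And>x. x \<in> set xs \<Longrightarrow> frac A m (m r x) (m r D) = frac A m x D"
      using D(1,2) ry(1) by (intro frac_scale) auto
    then have "map (\<lambda>x. frac A m x (m r D)) (map (m r) xs) = map (\<lambda>x. frac A m x D) xs"
      by simp
    then show ?thesis using D(3) by simp
  qed
  then have "X # Xs = map (\<lambda>x. frac A m x (m r D)) (y # map (m r) xs)" using ry by simp
  moreover have "set (y # map (m r) xs) \<subseteq> A" using D ry by (auto simp: mc)
  moreover have "m r D \<in> A" using ry D by (simp add: mc)
  ultimately show ?case using \<open>m r D \<in> A\<close> by (intro bexI[of _ "m r D"] exI[of _ "y # map (m r) xs"]) simp_all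
qed

lemma map3: "map f xs = [a,b,c] \<Longrightarrow> \<exists>x y z. xs = [x,y,z] \<and> a = f x \<and> b = f y \<and> c = f z"
  by (auto simp: map_eq_Cons_conv)

lemma map5: "map f xs = [a,b,c,d,e] \<Longrightarrow> \<exists>x y z u v. xs = [x,y,z,u,v] \<and> a = f x \<and> b = f y \<and> c = f z
   \<and> d = f u \<and> e = f v"
  by (auto simp: map_eq_Cons_conv)

lemma Q_ne: "X \<in> Q A m \<Longrightarrow> A \<noteq> {}"
  by (erule Q_cases) auto

lemma common3:
  assumes "X \<in> Q A m" "Y \<in> Q A m" "Z \<in> Q A m"
  obtains D x y z where "D\<in>A" "x\<in>A" "y\<in>A" "z\<in>A"
    "X = frac A m x D" "Y = frac A m y D" "Z = frac A m z D"
proof -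
  obtain D xs where D: "D\<in>A" "set xs \<subseteq> A" "[X,Y,Z] = map (\<lambda>x. frac A m x D) xs"
  proof -
    have "\<exists>D\<in>A. \<exists>xs. set xs \<subseteq> A \<and> [X,Y,Z] = map (\<lambda>x. frac A m x D) xs"
      by (rule common) (use assms Q_ne[OF assms(1)] in auto)
    then obtain D0 xs0 where "D0 \<in> A" "set xs0 \<subseteq> A" "[X,Y,Z] = map (\<lambda>x. frac A m x D0) xs0" by (elim bexE exE conjE)
    then show ?thesis by (rule that)
  qed
  from map3[OF D(3)[symmetric]] obtain x y z where xyz: "xs = [x,y,z]" "X = frac A m x D"
    "Y = frac A m y D" "Z = frac A m z D" by blast
  have inA: "x\<in>A" "y\<in>A" "z\<in>A" using xyz(1) D(2) by auto
  show ?thesis by (rule that[OF D(1) inA xyz(2-4)])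
qed

lemma common5:
  assumes "X1 \<in> Q A m" "X2 \<in> Q A m" "X3 \<in> Q A m" "X4 \<in> Q A m" "X5 \<in> Q A m"
  obtains D x1 x2 x3 x4 x5 where "D\<in>A" "x1\<in>A" "x2\<in>A" "x3\<in>A" "x4\<in>A" "x5\<in>A"
    "X1 = frac A m x1 D" "X2 = frac A m x2 D" "X3 = frac A m x3 D" "X4 = frac A m x4 D" "X5 = frac A m x5 D"
proof -
  obtain D xs where D: "D\<in>A" "set xs \<subseteq> A" "[X1,X2,X3,X4,X5] = map (\<lambda>x. frac A m x D) xs"
  proof -
    have "\<exists>D\<in>A. \<exists>xs. set xs \<subseteq> A \<and> [X1,X2,X3,X4,X5] = map (\<lambda>x. frac A m x D) xs"
      by (rule common) (use assms Q_ne[OF assms(1)] in auto)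
    then obtain D0 xs0 where "D0 \<in> A" "set xs0 \<subseteq> A" "[X1,X2,X3,X4,X5] = map (\<lambda>x. frac A m x D0) xs0" by (elim bexE exE conjE)
    then show ?thesis by (rule that)
  qed
  from map5[OF D(3)[symmetric]] obtain x1 x2 x3 x4 x5 where xyz: "xs = [x1,x2,x3,x4,x5]" "X1 = frac A m x1 D"
    "X2 = frac A m x2 D" "X3 = frac A m x3 D" "X4 = frac A m x4 D" "X5 = frac A m x5 D" by blast
  have inA: "x1\<in>A" "x2\<in>A" "x3\<in>A" "x4\<in>A" "x5\<in>A" using xyz(1) D(2) by auto
  show ?thesis by (rule that[OF D(1) inA xyz(2-6)])
qed

lemma heap_closed: "X \<in> Q A m \<Longrightarrow> Y \<in> Q A m \<Longrightarrow> Z \<in> Q A m \<Longrightarrow> Q_heap A h m X Y Z \<in> Q A m"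
  by (erule (2) common3) (simp add: heap_same frac_in hc)

lemma heap_assoc: "X1 \<in> Q A m \<Longrightarrow> X2 \<in> Q A m \<Longrightarrow> X3 \<in> Q A m \<Longrightarrow> X4 \<in> Q A m \<Longrightarrow> X5 \<in> Q A m \<Longrightarrow>
   Q_heap A h m X1 X2 (Q_heap A h m X3 X4 X5) = Q_heap A h m (Q_heap A h m X1 X2 X3) X4 X5"
  by (erule (4) common5) (simp add: heap_same hc hassoc)

lemma heap_id: "X \<in> Q A m \<Longrightarrow> Y \<in> Q A m \<Longrightarrow> Q_heap A h m X X Y = Y \<and> Q_heap A h m Y X X = Y"
  by (erule (1) common3[where Z=X]) (simp_all add: heap_same hid)

lemma mul_eq:
  assumes A: "a\<in>A" "b\<in>A" "a'\<in>A" "b'\<in>A" "\<gamma>\<in>A" "\<gamma>'\<in>A" and e: "m \<gamma> b' = m \<gamma>' a"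
  shows "Q_mul A m (frac A m a b) (frac A m a' b') = frac A m (m \<gamma> a') (m \<gamma>' b)"
  unfolding Q_mul_def
proof (rule the_equality)
  show "\<exists>b0 a0 b0' a0' \<gamma>0 \<gamma>0'. (b0, a0) \<in> frac A m a b \<and> (b0', a0') \<in> frac A m a' b' \<and>
     \<gamma>0 \<in> A \<and> \<gamma>0' \<in> A \<and> m \<gamma>0 b0' = m \<gamma>0' a0 \<and>
     frac A m (m \<gamma> a') (m \<gamma>' b) = frac A m (m \<gamma>0 a0') (m \<gamma>0' b0)"
    apply (rule exI[where x=b], rule exI[where x=a], rule exI[where x=b'], rule exI[where x=a'],
       rule exI[where x=\<gamma>], rule exI[where x=\<gamma>'])
    using A e by (simp add: self_frac)
next
  fix W assume "\<exists>b0 a0 b0' a0' \<gamma>0 \<gamma>0'. (b0, a0) \<in> frac A m a b \<and> (b0', a0') \<in> frac A m a' b' \<and>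
     \<gamma>0 \<in> A \<and> \<gamma>0' \<in> A \<and> m \<gamma>0 b0' = m \<gamma>0' a0 \<and>
     W = frac A m (m \<gamma>0 a0') (m \<gamma>0' b0)"
  then obtain c d c' d' \<delta> \<delta>' where r1: "((b,a),(c,d)) \<in> frac_rel A m"
    and r2: "((b',a'),(c',d')) \<in> frac_rel A m" and D: "\<delta>\<in>A" "\<delta>'\<in>A"
    and f: "m \<delta> c' = m \<delta>' d" and W: "W = frac A m (m \<delta> d') (m \<delta>' c)"
    by (auto simp: mem_frac)
  have C: "c\<in>A" "d\<in>A" "c'\<in>A" "d'\<in>A" using r1 r2 rel by auto
  obtain r s where rs: "r\<in>A" "s\<in>A" "m r (m \<gamma>' b) = m s (m \<delta>' c)"
    using ore[OF mc[OF A(6) A(2)] mc[OF D(2) C(1)]] by blast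
  have g1: "m (m r \<gamma>') b = m (m s \<delta>') c" using rs A D C by (simp add: ma)
  have k1: "m (m r \<gamma>') a = m (m s \<delta>') d"
    by (rule key[OF r1 mc[OF rs(1) A(6)] mc[OF rs(2) D(2)] g1])
  have g2: "m (m r \<gamma>) b' = m (m s \<delta>) c'"
  proof -
    have "m (m r \<gamma>) b' = m r (m \<gamma>' a)" using A rs e by (simp add: ma)
    also have "\<dots> = m (m r \<gamma>') a" using A rs by (simp add: ma)
    also have "\<dots> = m s (m \<delta>' d)" using k1 A rs D C by (simp add: ma)
    also have "\<dots> = m (m s \<delta>) c'" using f A rs D C by (simp add: ma)
    finally show ?thesis .
  qed
  have k2: "m (m r \<gamma>) a' = m (m s \<delta>) d'"
    by (rule key[OF r2 mc[OF rs(1) A(5)] mc[OF rs(2) D(1)] g2])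
  have rel3: "((m \<delta>' c, m \<delta> d'), (m \<gamma>' b, m \<gamma> a')) \<in> frac_rel A m"
    apply (simp add: rel mc A C D)
    apply (rule bexI[where x=s], rule bexI[where x=r])
    using rs k2 A C D by (simp_all add: ma)
  show "W = frac A m (m \<gamma> a') (m \<gamma>' b)" unfolding W
    using rel3 A C D by (subst frac_eq) (simp_all add: mc)
qed

lemma mul_chain: "c\<in>A \<Longrightarrow> d\<in>A \<Longrightarrow> e\<in>A \<Longrightarrow> Q_mul A m (frac A m c d) (frac A m e c) = frac A m e d"
  by (subst mul_eq[where \<gamma>=d and \<gamma>'=d]) (simp_all add: frac_scale)

lemma align: "X \<in> Q A m \<Longrightarrow> q\<in>A \<Longrightarrow> \<exists>t\<in>A. \<exists>p\<in>A. X = frac A m (m t q) p"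
proof -
  assume X: "X \<in> Q A m" and q: "q\<in>A"
  obtain a b where ab: "a\<in>A" "b\<in>A" "X = frac A m a b" by (rule Q_cases[OF X])
  obtain t s where ts: "t\<in>A" "s\<in>A" "m t q = m s a" using ore[OF q ab(1)] by blast
  have "X = frac A m (m t q) (m s b)" using ts ab by (simp add: frac_scale)
  moreover have "m s b \<in> A" using ts ab by (simp add: mc)
  ultimately show ?thesis using ts by blast
qed

lemma mul_closed: "X \<in> Q A m \<Longrightarrow> Y \<in> Q A m \<Longrightarrow> Q_mul A m X Y \<in> Q A m"
proof -
  assume X: "X \<in> Q A m" and Y: "Y \<in> Q A m"
  obtain e c where ec: "e\<in>A" "c\<in>A" "Y = frac A m e c" by (rule Q_cases[OF Y])
  obtain t p where tp: "t\<in>A" "p\<in>A" "X = frac A m (m t c) p" using align[OF X ec(2)] by blast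
  have "Y = frac A m (m t e) (m t c)" using ec tp by (simp add: frac_scale)
  then show ?thesis using tp ec by (simp add: mul_chain mc frac_in)
qed

lemma mul_assoc: "X \<in> Q A m \<Longrightarrow> Y \<in> Q A m \<Longrightarrow> Z \<in> Q A m \<Longrightarrow>
    Q_mul A m (Q_mul A m X Y) Z = Q_mul A m X (Q_mul A m Y Z)"
proof -
  assume X: "X \<in> Q A m" and Y: "Y \<in> Q A m" and Z: "Z \<in> Q A m"
  obtain e c where ec: "e\<in>A" "c\<in>A" "Z = frac A m e c" by (rule Q_cases[OF Z])
  obtain t p where tp: "t\<in>A" "p\<in>A" "Y = frac A m (m t c) p" using align[OF Y ec(2)] by blast
  obtain u w where uw: "u\<in>A" "w\<in>A" "X = frac A m (m u p) w" using align[OF X tp(2)] by blast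
  have Z': "Z = frac A m (m u (m t e)) (m u (m t c))" using ec tp uw by (simp add: frac_scale mc)
  have Y': "Y = frac A m (m u (m t c)) (m u p)" using ec tp uw by (simp add: frac_scale mc)
  show ?thesis unfolding Z' Y' uw(3) using ec tp uw by (simp add: mul_chain mc)
qed

lemma mul_dist: "X \<in> Q A m \<Longrightarrow> Y1 \<in> Q A m \<Longrightarrow> Y2 \<in> Q A m \<Longrightarrow> Y3 \<in> Q A m \<Longrightarrow>
   Q_mul A m X (Q_heap A h m Y1 Y2 Y3) = Q_heap A h m (Q_mul A m X Y1) (Q_mul A m X Y2) (Q_mul A m X Y3)"
proof -
  assume X: "X \<in> Q A m" and Y: "Y1 \<in> Q A m" "Y2 \<in> Q A m" "Y3 \<in> Q A m"
  obtain D y1 y2 y3 where D: "D\<in>A" "y1\<in>A" "y2\<in>A" "y3\<in>A"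
    "Y1 = frac A m y1 D" "Y2 = frac A m y2 D" "Y3 = frac A m y3 D" by (rule common3[OF Y])
  obtain t p where tp: "t\<in>A" "p\<in>A" "X = frac A m (m t D) p" using align[OF X D(1)] by blast
  have e: "\<And>y. y\<in>A \<Longrightarrow> frac A m y D = frac A m (m t y) (m t D)" using tp D by (simp add: frac_scale)
  have "Q_heap A h m Y1 Y2 Y3 = frac A m (m t (h y1 y2 y3)) (m t D)"
    using D tp by (simp add: heap_same frac_scale hc)
  then have "Q_mul A m X (Q_heap A h m Y1 Y2 Y3) = frac A m (m t (h y1 y2 y3)) p"
    using D tp by (simp add: mul_chain mc hc)
  also have "\<dots> = Q_heap A h m (frac A m (m t y1) p) (frac A m (m t y2) p) (frac A m (m t y3) p)"
    using D tp by (simp add: heap_same mc dist)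
  also have "\<dots> = Q_heap A h m (Q_mul A m X Y1) (Q_mul A m X Y2) (Q_mul A m X Y3)"
    using D tp e by (simp add: mul_chain mc)
  finally show ?thesis .
qed

lemma Q_nt: "near_truss (Q A m) (Q_heap A h m) (Q_mul A m)"
  unfolding near_truss_def is_heap_def
  by (simp add: heap_closed heap_assoc heap_id mul_closed mul_assoc mul_dist)

lemma Q_group: "b \<in> A \<Longrightarrow> group \<lparr>carrier = Q A m, monoid.mult = Q_mul A m, one = frac A m b b\<rparr>"
proof (rule groupI)
  assume b: "b\<in>A"
  show "\<And>x y. x \<in> carrier \<lparr>carrier = Q A m, monoid.mult = Q_mul A m, one = frac A m b b\<rparr> \<Longrightarrow>
    y \<in> carrier \<lparr>carrier = Q A m, monoid.mult = Q_mul A m, one = frac A m b b\<rparr> \<Longrightarrow>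
    x \<otimes>\<^bsub>\<lparr>carrier = Q A m, monoid.mult = Q_mul A m, one = frac A m b b\<rparr>\<^esub> y \<in> carrier \<lparr>carrier = Q A m, monoid.mult = Q_mul A m, one = frac A m b b\<rparr>"
    by (simp add: mul_closed)
  show "\<one>\<^bsub>\<lparr>carrier = Q A m, monoid.mult = Q_mul A m, one = frac A m b b\<rparr>\<^esub> \<in> carrier \<lparr>carrier = Q A m, monoid.mult = Q_mul A m, one = frac A m b b\<rparr>"
    using b by (simp add: frac_in)
  show "\<And>x y z. x \<in> carrier \<lparr>carrier = Q A m, monoid.mult = Q_mul A m, one = frac A m b b\<rparr> \<Longrightarrow>
    y \<in> carrier \<lparr>carrier = Q A m, monoid.mult = Q_mul A m, one = frac A m b b\<rparr> \<Longrightarrow>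
    z \<in> carrier \<lparr>carrier = Q A m, monoid.mult = Q_mul A m, one = frac A m b b\<rparr> \<Longrightarrow>
    x \<otimes>\<^bsub>\<lparr>carrier = Q A m, monoid.mult = Q_mul A m, one = frac A m b b\<rparr>\<^esub> y \<otimes>\<^bsub>\<lparr>carrier = Q A m, monoid.mult = Q_mul A m, one = frac A m b b\<rparr>\<^esub> z =
    x \<otimes>\<^bsub>\<lparr>carrier = Q A m, monoid.mult = Q_mul A m, one = frac A m b b\<rparr>\<^esub> (y \<otimes>\<^bsub>\<lparr>carrier = Q A m, monoid.mult = Q_mul A m, one = frac A m b b\<rparr>\<^esub> z)"
    by (simp add: mul_assoc)
  show "\<And>x. x \<in> carrier \<lparr>carrier = Q A m, monoid.mult = Q_mul A m, one = frac A m b b\<rparr> \<Longrightarrow>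
     \<one>\<^bsub>\<lparr>carrier = Q A m, monoid.mult = Q_mul A m, one = frac A m b b\<rparr>\<^esub> \<otimes>\<^bsub>\<lparr>carrier = Q A m, monoid.mult = Q_mul A m, one = frac A m b b\<rparr>\<^esub> x = x"
  proof -
    fix x assume "x \<in> carrier \<lparr>carrier = Q A m, monoid.mult = Q_mul A m, one = frac A m b b\<rparr>"
    then have x: "x \<in> Q A m" by simp
    obtain r q where rq: "r\<in>A" "q\<in>A" "x = frac A m r q" by (rule Q_cases[OF x])
    have "frac A m b b = frac A m q q" using frac_one[of b q] b rq(2) by simp
    then show "\<one>\<^bsub>\<lparr>carrier = Q A m, monoid.mult = Q_mul A m, one = frac A m b b\<rparr>\<^esub> \<otimes>\<^bsub>\<lparr>carrier = Q A m, monoid.mult = Q_mul A m, one = frac A m b b\<rparr>\<^esub> x = x"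
      using rq by (simp add: mul_chain)
  qed
  show "\<And>x. x \<in> carrier \<lparr>carrier = Q A m, monoid.mult = Q_mul A m, one = frac A m b b\<rparr> \<Longrightarrow>
     \<exists>y\<in>carrier \<lparr>carrier = Q A m, monoid.mult = Q_mul A m, one = frac A m b b\<rparr>.
        y \<otimes>\<^bsub>\<lparr>carrier = Q A m, monoid.mult = Q_mul A m, one = frac A m b b\<rparr>\<^esub> x = \<one>\<^bsub>\<lparr>carrier = Q A m, monoid.mult = Q_mul A m, one = frac A m b b\<rparr>\<^esub>"
  proof -
    fix x assume "x \<in> carrier \<lparr>carrier = Q A m, monoid.mult = Q_mul A m, one = frac A m b b\<rparr>"
    then have x: "x \<in> Q A m" by simp
    obtain q p where qp: "q\<in>A" "p\<in>A" "x = frac A m q p" by (rule Q_cases[OF x])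
    have "Q_mul A m (frac A m p q) x = frac A m b b" using qp b mul_chain[of p q q] frac_one[of q b] by simp
    moreover have "frac A m p q \<in> Q A m" using qp by (simp add: frac_in)
    ultimately show "\<exists>y\<in>carrier \<lparr>carrier = Q A m, monoid.mult = Q_mul A m, one = frac A m b b\<rparr>.
        y \<otimes>\<^bsub>\<lparr>carrier = Q A m, monoid.mult = Q_mul A m, one = frac A m b b\<rparr>\<^esub> x = \<one>\<^bsub>\<lparr>carrier = Q A m, monoid.mult = Q_mul A m, one = frac A m b b\<rparr>\<^esub>"
      by auto
  qed
qed

end

theorem corollary5p5:
  fixes A :: "'a set" and h :: "'a \<Rightarrow> 'a \<Rightarrow> 'a \<Rightarrow> 'a" and m :: "'a \<Rightarrow> 'a \<Rightarrow> 'a"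
  assumes "near_truss A h m"
    and "left_regular A m"
    and "\<not> (\<exists>z. absorber A m z)"
  shows "near_truss (Q A m) (Q_heap A h m) (Q_mul A m) \<and>
         (\<forall>b\<in>A. skew_brace (Q A m) (retract (Q_heap A h m) (frac A m b b)) (Q_mul A m))"
proof (intro conjI ballI)
  show "near_truss (Q A m) (Q_heap A h m) (Q_mul A m)" by (rule Q_nt[OF assms])
  fix b assume b: "b \<in> A"
  show "skew_brace (Q A m) (retract (Q_heap A h m) (frac A m b b)) (Q_mul A m)"
    by (rule near_truss_group_skew_brace[OF Q_nt[OF assms] Q_group[OF assms b]])
qed

end
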